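(* Let $\mu,\sigma$ be nonzero constants, let $J$ be an open interval, let $a$ be a smooth function on $J$ with $a(y)\neq0$, and let $A$ be an antiderivative of $a$ on $J$ with $A(y)\neq0$ for all $y\in J$. Consider the PDE $$a'(y)U-a(y)U_y-3\mu U^2U_r+\sigma U_yU_{rr}-\sigma UU_{rry}=0$$ for $U=U(r,y)$, $(r,y)\in\mathbb{R}\times J$. For a smooth function $R$ on $\mathbb{R}$, the function $$U(r,y)=a(y)A(y)^{-2/3}R\big(rA(y)^{1/3}\big)$$ (real cube roots) solves this PDE if and only if $R=R(z)$ satisfies $$-\sigma zRR'''+\sigma zR'R''-2\sigma RR''-9\mu R^2R'-zR'+2R=0.$$ *)

theory Defs
  imports "HOL-Analysis.Analysis"
begin

definition smooth_on :: "real set \<Rightarrow> (real \<Rightarrow> real) \<Rightarrow> bool" where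
  "smooth_on S f \<longleftrightarrow> (\<forall>n. \<forall>x\<in>S. ((deriv ^^ n) f) differentiable (at x))"

definition dr :: "(real \<Rightarrow> real \<Rightarrow> real) \<Rightarrow> real \<Rightarrow> real \<Rightarrow> real" where
  "dr U r y = deriv (\<lambda>s. U s y) r"
definition dy :: "(real \<Rightarrow> real \<Rightarrow> real) \<Rightarrow> real \<Rightarrow> real \<Rightarrow> real" where
  "dy U r y = deriv (\<lambda>t. U r t) y"

end

theory Submission
  imports Defs
begin

lemma core:
  fixes a c R R1 R2 R3 :: "real \<Rightarrow> real" and y r ad cd :: real
  assumes R: "\<And>x. (R has_real_derivative R1 x) (at x)"
      and R1: "\<And>x. (R1 has_real_derivative R2 x) (at x)"
      and R2: "\<And>x. (R2 has_real_derivative R3 x) (at x)"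
      and a: "(a has_real_derivative ad) (at y)"
      and c: "(c has_real_derivative cd) (at y)"
      and c0: "c y \<noteq> 0"
  defines "U \<equiv> (\<lambda>r t. a t * inverse ((c t)^2) * R (r * c t))"
  shows "dr U = (\<lambda>s t. a t * inverse ((c t)^2) * (R1 (s * c t) * c t))"
    and "dr (dr U) = (\<lambda>s t. a t * inverse ((c t)^2) * (R2 (s * c t) * c t * c t))"
    and "dy U r y = ad * inverse ((c y)^2) * R (r * c y) - 2 * a y * cd * inverse ((c y)^3) * R (r * c y)
          + a y * inverse ((c y)^2) * R1 (r * c y) * r * cd"
    and "dy (dr (dr U)) r y = ad * R2 (r * c y) + a y * R3 (r * c y) * r * cd"
proof -
  have cR: "\<And>g g' x. (g has_real_derivative g') (at x) \<Longrightarrow> ((\<lambda>x. R (g x)) has_real_derivative R1 (g x) * g') (at x)"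
    by (rule DERIV_chain2[OF R])
  have cR1: "\<And>g g' x. (g has_real_derivative g') (at x) \<Longrightarrow> ((\<lambda>x. R1 (g x)) has_real_derivative R2 (g x) * g') (at x)"
    by (rule DERIV_chain2[OF R1])
  have cR2: "\<And>g g' x. (g has_real_derivative g') (at x) \<Longrightarrow> ((\<lambda>x. R2 (g x)) has_real_derivative R3 (g x) * g') (at x)"
    by (rule DERIV_chain2[OF R2])
  show 1: "dr U = (\<lambda>s t. a t * inverse ((c t)^2) * (R1 (s * c t) * c t))"
    unfolding dr_def U_def
    by (intro ext DERIV_imp_deriv) (auto intro!: derivative_eq_intros cR)
  show 2: "dr (dr U) = (\<lambda>s t. a t * inverse ((c t)^2) * (R2 (s * c t) * c t * c t))"
    unfolding 1 dr_def
    by (intro ext DERIV_imp_deriv) (auto intro!: derivative_eq_intros cR1)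
  show "dy U r y = ad * inverse ((c y)^2) * R (r * c y) - 2 * a y * cd * inverse ((c y)^3) * R (r * c y)
          + a y * inverse ((c y)^2) * R1 (r * c y) * r * cd"
    unfolding dy_def U_def
    apply (intro DERIV_imp_deriv)
    apply (rule derivative_eq_intros a c cR refl | simp add: c0)+
    using c0 apply (simp add: field_simps power2_eq_square power3_eq_cube)
    done
  show "dy (dr (dr U)) r y = ad * R2 (r * c y) + a y * R3 (r * c y) * r * cd"
    unfolding dy_def 2
    apply (intro DERIV_imp_deriv)
    apply (rule derivative_eq_intros a c cR2 refl | simp add: c0)+
    using c0 apply (simp add: field_simps power2_eq_square power3_eq_cube)
    done
qed

lemma alg:
  fixes \<mu> \<sigma> ad \<alpha> \<gamma> r Qa Qb Qc Qd :: real
  assumes "\<gamma> \<noteq> 0"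
  shows "ad * (\<alpha> * inverse (\<gamma>^2) * Qa) - \<alpha> * (ad * inverse (\<gamma>^2) * Qa - 2 * \<alpha> * (\<alpha> / (3 * \<gamma>^2)) * inverse (\<gamma>^3) * Qa
          + \<alpha> * inverse (\<gamma>^2) * Qb * r * (\<alpha> / (3 * \<gamma>^2)))
     - 3 * \<mu> * (\<alpha> * inverse (\<gamma>^2) * Qa)^2 * (\<alpha> * inverse (\<gamma>^2) * (Qb * \<gamma>))
     + \<sigma> * (ad * inverse (\<gamma>^2) * Qa - 2 * \<alpha> * (\<alpha> / (3 * \<gamma>^2)) * inverse (\<gamma>^3) * Qa
          + \<alpha> * inverse (\<gamma>^2) * Qb * r * (\<alpha> / (3 * \<gamma>^2))) * (\<alpha> * inverse (\<gamma>^2) * (Qc * \<gamma> * \<gamma>))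
     - \<sigma> * (\<alpha> * inverse (\<gamma>^2) * Qa) * (ad * Qc + \<alpha> * Qd * r * (\<alpha> / (3 * \<gamma>^2)))
   = \<alpha>^3 / (3 * \<gamma>^5) * (- \<sigma> * (r*\<gamma>) * Qa * Qd + \<sigma> * (r*\<gamma>) * Qb * Qc
           - 2 * \<sigma> * Qa * Qc - 9 * \<mu> * Qa^2 * Qb
           - (r*\<gamma>) * Qb + 2 * Qa)"
  using assms by (simp add: field_simps power2_eq_square power3_eq_cube) (simp add: algebra_simps eval_nat_numeral)

theorem mainTheorem5:
  fixes \<mu> \<sigma> :: real and J :: "real set" and a A R :: "real \<Rightarrow> real"
  assumes "\<mu> \<noteq> 0" and "\<sigma> \<noteq> 0"
    and "open J" and "is_interval J" and "J \<noteq> {}"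
    and "smooth_on J a" and "\<forall>y\<in>J. a y \<noteq> 0"
    and "\<forall>y\<in>J. (A has_real_derivative a y) (at y)"
    and "\<forall>y\<in>J. A y \<noteq> 0"
    and "smooth_on UNIV R"
  shows "(let U = (\<lambda>r y. a y * inverse ((root 3 (A y))^2) * R (r * root 3 (A y))) in
           \<forall>r. \<forall>y\<in>J.
             deriv a y * U r y - a y * dy U r y - 3 * \<mu> * (U r y)^2 * dr U r y
             + \<sigma> * dy U r y * dr (dr U) r y - \<sigma> * U r y * dy (dr (dr U)) r y = 0)
     \<longleftrightarrow>
     (\<forall>z. - \<sigma> * z * R z * (deriv ^^ 3) R z + \<sigma> * z * deriv R z * (deriv ^^ 2) R z
           - 2 * \<sigma> * R z * (deriv ^^ 2) R z - 9 * \<mu> * (R z)^2 * deriv R z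
           - z * deriv R z + 2 * R z = 0)"
proof -
  define c where "c = (\<lambda>t. root 3 (A t))"
  define R1 where "R1 = deriv R"
  define R2 where "R2 = deriv R1"
  define R3 where "R3 = deriv R2"
  have sm: "\<And>n x. ((deriv ^^ n) R) differentiable (at x)"
    using assms(10) unfolding smooth_on_def by auto
  have dR: "\<And>x. (R has_real_derivative R1 x) (at x)"
    using sm[of 0] unfolding R1_def by (simp add: DERIV_deriv_iff_real_differentiable)
  have dR1: "\<And>x. (R1 has_real_derivative R2 x) (at x)"
    using sm[of 1] unfolding R2_def R1_def by (simp add: DERIV_deriv_iff_real_differentiable)
  have dR2: "\<And>x. (R2 has_real_derivative R3 x) (at x)"
    using sm[of 2] unfolding R3_def R2_def R1_def by (simp add: DERIV_deriv_iff_real_differentiable eval_nat_numeral)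
  have d2: "(deriv ^^ 2) R = R2" and d3: "(deriv ^^ 3) R = R3"
    unfolding R3_def R2_def R1_def by (simp_all add: eval_nat_numeral)
  have c0: "c y \<noteq> 0" if "y \<in> J" for y
    using assms(9) that unfolding c_def by simp
  have dc: "(c has_real_derivative a y / (3 * (c y)^2)) (at y)" if "y \<in> J" for y
  proof -
    have "(root 3 has_real_derivative inverse (real 3 * root 3 (A y) ^ (3 - Suc 0))) (at (A y))"
      by (rule DERIV_odd_real_root) (use assms(9) that in auto)
    from DERIV_chain2[OF this assms(8)[rule_format, OF that]]
    show ?thesis unfolding c_def by (simp add: field_simps eval_nat_numeral)
  qed
  have da: "(a has_real_derivative deriv a y) (at y)" if "y \<in> J" for y
    using assms(6) that unfolding smooth_on_def
    by (metis DERIV_deriv_iff_real_differentiable funpow_0)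
  define U where "U = (\<lambda>r t. a t * inverse ((c t)^2) * R (r * c t))"
  define ODE where "ODE = (\<lambda>z. - \<sigma> * z * R z * R3 z + \<sigma> * z * R1 z * R2 z
           - 2 * \<sigma> * R z * R2 z - 9 * \<mu> * (R z)^2 * R1 z
           - z * R1 z + 2 * R z)"
  have key: "deriv a y * U r y - a y * dy U r y - 3 * \<mu> * (U r y)^2 * dr U r y
             + \<sigma> * dy U r y * dr (dr U) r y - \<sigma> * U r y * dy (dr (dr U)) r y
           = (a y)^3 / (3 * (c y)^5) * ODE (r * c y)" if "y \<in> J" for r y
  proof -
    note co = core[OF dR dR1 dR2 da[OF that] dc[OF that] c0[OF that], folded U_def]
    show ?thesis unfolding co(4) unfolding co(2) unfolding co(3) co(1) ODE_def
      using alg[OF c0[OF that], where ad="deriv a y" and \<alpha>="a y" and r=r and Qa="R (r * c y)" and Qb="R1 (r * c y)" and Qc="R2 (r * c y)" and Qd="R3 (r * c y)" and \<mu>=\<mu> and \<sigma>=\<sigma>]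
      unfolding U_def by simp
  qed
  have lhs: "(let U = (\<lambda>r y. a y * inverse ((root 3 (A y))^2) * R (r * root 3 (A y))) in
           \<forall>r. \<forall>y\<in>J.
             deriv a y * U r y - a y * dy U r y - 3 * \<mu> * (U r y)^2 * dr U r y
             + \<sigma> * dy U r y * dr (dr U) r y - \<sigma> * U r y * dy (dr (dr U)) r y = 0)
     \<longleftrightarrow> (\<forall>r. \<forall>y\<in>J. ODE (r * c y) = 0)"
    unfolding Let_def U_def[symmetric, unfolded c_def] c_def[symmetric]
    using key assms(7) c0 by auto
  have "(\<forall>r. \<forall>y\<in>J. ODE (r * c y) = 0) \<longleftrightarrow> (\<forall>z. ODE z = 0)"
  proof
    assume h: "\<forall>r. \<forall>y\<in>J. ODE (r * c y) = 0"
    obtain y0 where y0: "y0 \<in> J" using assms(5) by auto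
    show "\<forall>z. ODE z = 0"
    proof
      fix z
      from h y0 have "ODE ((z / c y0) * c y0) = 0" by blast
      then show "ODE z = 0" using c0[OF y0] by simp
    qed
  qed auto
  then show ?thesis unfolding lhs d2 d3 ODE_def R1_def by simp
qed

end
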